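(* Let $\varphi$ be an IPDL-formula all of whose propositional variables are among $p_1,\ldots,p_n$ and all of whose atomic program terms are among $a_1,\ldots,a_l$ ($l\ge 1$). Let $\gamma = a_1\cup\cdots\cup a_l$, let $\cdot'$ be the translation defined in the context (which uses the fresh variable $p_{n+1}$), let $$\Theta = p_{n+1}\wedge [\gamma^*](\langle\gamma\rangle p_{n+1}\rightarrow p_{n+1}),$$ and let $\widehat{\varphi} = \Theta\wedge\varphi'$. Then $\varphi$ is satisfiable if, and only if, $\widehat{\varphi}$ is satisfiable.
   Context: Fix a countable set $\mathit{Var}=\{p_1,p_2,\ldots\}$ of propositional variables and a countable set $AP=\{a_1,a_2,\ldots\}$ of atomic program terms. IPDL formulas $\varphi$ and program terms $\alpha$ are defined simultaneously by $\varphi ::= p \mid \bot \mid (\varphi\rightarrow\varphi)\mid [\alpha]\varphi$ and $\alpha ::= a \mid \varphi? \mid (\alpha;\alpha)\mid(\alpha\cup\alpha)\mid(\alpha\cap\alpha)\mid \alpha^*$, where $p\in\mathit{Var}$, $a\in AP$. The connectives $\neg,\wedge,\vee,\leftrightarrow,\top$ are defined as usual and $\langle\alpha\rangle\psi=\neg[\alpha]\neg\psi$. A Kripke model is $\mathfrak{M}=(S,\{R_a\}_{a\in AP},V)$ with $S$ a nonempty set, each $R_a\subseteq S\times S$, and $V:\mathit{Var}\to 2^S$. Relations for compound programs and the satisfaction relation are defined simultaneously: $(s,t)\in R_{\psi?}$ iff $s=t$ and $\mathfrak{M},s\models\psi$; $R_{\alpha;\beta}$ is the relational composition of $R_\alpha$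 and $R_\beta$; $R_{\alpha\cup\beta}=R_\alpha\cup R_\beta$; $R_{\alpha\cap\beta}=R_\alpha\cap R_\beta$; $R_{\alpha^*}$ is the reflexive transitive closure of $R_\alpha$; $\mathfrak{M},s\models p$ iff $s\in V(p)$; $\mathfrak{M},s\not\models\bot$; $\mathfrak{M},s\models\psi\rightarrow\chi$ iff $\mathfrak{M},s\models\psi$ implies $\mathfrak{M},s\models\chi$; $\mathfrak{M},s\models[\alpha]\psi$ iff $\mathfrak{M},t\models\psi$ for all $t$ with $(s,t)\in R_\alpha$. A formula is satisfiable if it is true at some state of some model. The translation $\cdot'$ (for $\varphi$ as in the claim) is defined recursively: $a_j'=a_j$; $(\alpha;\beta)'=\alpha';\beta'$; $(\alpha\cup\beta)'=\alpha'\cup\beta'$; $(\alpha\cap\beta)'=\alpha'\cap\beta'$; $(\alpha^* )'=(\alpha')^*$; $(\psi?)'=(\psi')?$; $p_i'=p_i$ for $i\le n$; $\bot'=\bot$; $(\psi\rightarrow\chi)'=\psi'\rightarrow\chi'$; $([\alpha]\psi)'=[\alpha'](p_{n+1}\rightarrow\psi')$. *)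

theory Defs
  imports Main
begin

text \<open>Propositional variable p_i is Var i, atomic program a_j is Atom j (indices in nat).\<close>

datatype fm = Var nat | Bot | Imp fm fm | Box prog fm
and prog = Atom nat | Test fm | Seq prog prog | Union prog prog | Inter prog prog | Star prog

definition Neg :: "fm \<Rightarrow> fm" where "Neg \<phi> = Imp \<phi> Bot"
definition And :: "fm \<Rightarrow> fm \<Rightarrow> fm" where "And \<phi> \<psi> = Neg (Imp \<phi> (Neg \<psi>))"
definition Dia :: "prog \<Rightarrow> fm \<Rightarrow> fm" where "Dia \<alpha> \<phi> = Neg (Box \<alpha> (Neg \<phi>))"

record 's kmodel =
  St :: "'s set"
  R :: "nat \<Rightarrow> ('s \<times> 's) set"
  V :: "nat \<Rightarrow> 's set"

definition is_model :: "('s, 'x) kmodel_scheme \<Rightarrow> bool" where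
  "is_model M \<longleftrightarrow> St M \<noteq> {} \<and> (\<forall>a. R M a \<subseteq> St M \<times> St M) \<and> (\<forall>p. V M p \<subseteq> St M)"

fun sat :: "'s kmodel \<Rightarrow> 's \<Rightarrow> fm \<Rightarrow> bool"
and rel :: "'s kmodel \<Rightarrow> prog \<Rightarrow> ('s \<times> 's) set" where
  "sat M s (Var p) = (s \<in> V M p)"
| "sat M s Bot = False"
| "sat M s (Imp \<psi> \<chi>) = (sat M s \<psi> \<longrightarrow> sat M s \<chi>)"
| "sat M s (Box \<alpha> \<psi>) = (\<forall>t. (s, t) \<in> rel M \<alpha> \<longrightarrow> sat M t \<psi>)"
| "rel M (Atom a) = R M a"
| "rel M (Test \<psi>) = {(s, s) | s. s \<in> St M \<and> sat M s \<psi>}"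
| "rel M (Seq \<alpha> \<beta>) = rel M \<alpha> O rel M \<beta>"
| "rel M (Union \<alpha> \<beta>) = rel M \<alpha> \<union> rel M \<beta>"
| "rel M (Inter \<alpha> \<beta>) = rel M \<alpha> \<inter> rel M \<beta>"
| "rel M (Star \<alpha>) = Id_on (St M) \<union> (rel M \<alpha>)\<^sup>+"

definition satisfiable :: "'s itself \<Rightarrow> fm \<Rightarrow> bool" where
  "satisfiable _ \<phi> \<longleftrightarrow> (\<exists>(M :: 's kmodel) s. is_model M \<and> s \<in> St M \<and> sat M s \<phi>)"

fun vars :: "fm \<Rightarrow> nat set" and pvars :: "prog \<Rightarrow> nat set" where
  "vars (Var p) = {p}"
| "vars Bot = {}"
| "vars (Imp \<psi> \<chi>) = vars \<psi> \<union> vars \<chi>"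
| "vars (Box \<alpha> \<psi>) = pvars \<alpha> \<union> vars \<psi>"
| "pvars (Atom a) = {}"
| "pvars (Test \<psi>) = vars \<psi>"
| "pvars (Seq \<alpha> \<beta>) = pvars \<alpha> \<union> pvars \<beta>"
| "pvars (Union \<alpha> \<beta>) = pvars \<alpha> \<union> pvars \<beta>"
| "pvars (Inter \<alpha> \<beta>) = pvars \<alpha> \<union> pvars \<beta>"
| "pvars (Star \<alpha>) = pvars \<alpha>"

fun atoms :: "fm \<Rightarrow> nat set" and patoms :: "prog \<Rightarrow> nat set" where
  "atoms (Var p) = {}"
| "atoms Bot = {}"
| "atoms (Imp \<psi> \<chi>) = atoms \<psi> \<union> atoms \<chi>"
| "atoms (Box \<alpha> \<psi>) = patoms \<alpha> \<union> atoms \<psi>"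
| "patoms (Atom a) = {a}"
| "patoms (Test \<psi>) = atoms \<psi>"
| "patoms (Seq \<alpha> \<beta>) = patoms \<alpha> \<union> patoms \<beta>"
| "patoms (Union \<alpha> \<beta>) = patoms \<alpha> \<union> patoms \<beta>"
| "patoms (Inter \<alpha> \<beta>) = patoms \<alpha> \<union> patoms \<beta>"
| "patoms (Star \<alpha>) = patoms \<alpha>"

fun gamma :: "nat \<Rightarrow> prog" where
  "gamma 0 = Test Bot"
| "gamma (Suc 0) = Atom 1"
| "gamma (Suc (Suc k)) = Union (gamma (Suc k)) (Atom (Suc (Suc k)))"

fun tr :: "nat \<Rightarrow> fm \<Rightarrow> fm" and ptr :: "nat \<Rightarrow> prog \<Rightarrow> prog" where
  "tr n (Var p) = Var p"
| "tr n Bot = Bot"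
| "tr n (Imp \<psi> \<chi>) = Imp (tr n \<psi>) (tr n \<chi>)"
| "tr n (Box \<alpha> \<psi>) = Box (ptr n \<alpha>) (Imp (Var (n + 1)) (tr n \<psi>))"
| "ptr n (Atom a) = Atom a"
| "ptr n (Test \<psi>) = Test (tr n \<psi>)"
| "ptr n (Seq \<alpha> \<beta>) = Seq (ptr n \<alpha>) (ptr n \<beta>)"
| "ptr n (Union \<alpha> \<beta>) = Union (ptr n \<alpha>) (ptr n \<beta>)"
| "ptr n (Inter \<alpha> \<beta>) = Inter (ptr n \<alpha>) (ptr n \<beta>)"
| "ptr n (Star \<alpha>) = Star (ptr n \<alpha>)"

definition Theta :: "nat \<Rightarrow> nat \<Rightarrow> fm" where
  "Theta n l = And (Var (n + 1))
     (Box (Star (gamma l)) (Imp (Dia (gamma l) (Var (n + 1))) (Var (n + 1))))"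

definition hat :: "nat \<Rightarrow> nat \<Rightarrow> fm \<Rightarrow> fm" where
  "hat n l \<phi> = And (Theta n l) (tr n \<phi>)"

end

theory Submission
  imports Defs
begin

lemma rel_sub:
  fixes \<phi> :: fm
  assumes "is_model M"
  shows "\<phi> = \<phi>" and "rel M \<alpha> \<subseteq> St M \<times> St M"
proof (induction \<phi> and \<alpha>)
  case (Star \<alpha>)
  then show ?case using trancl_subset_Sigma[of "rel M \<alpha>" "St M"] by auto
qed (use assms in \<open>auto simp: is_model_def\<close>)

lemma rel_gamma:
  "l \<ge> 1 \<Longrightarrow> rel M (gamma l) = (\<Union>a\<in>{1..l}. R M a)"
proof (induction l rule: gamma.induct)
  case (3 k)
  have e: "{1..Suc (Suc k)} = insert (Suc (Suc k)) {1..Suc k}" by auto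
  show ?case using 3 by (simp only: e rel.simps gamma.simps) auto
qed auto

lemma fwd:
  fixes M :: "'s kmodel" and n :: nat
  assumes "is_model M"
  defines "M' \<equiv> M\<lparr>V := (V M)(n+1 := St M)\<rparr>"
  shows "vars \<psi> \<subseteq> {1..n} \<Longrightarrow> s \<in> St M \<Longrightarrow> sat M' s (tr n \<psi>) = sat M s \<psi>"
    and "pvars \<alpha> \<subseteq> {1..n} \<Longrightarrow> rel M' (ptr n \<alpha>) = rel M \<alpha>"
proof (induction \<psi> and \<alpha> arbitrary: s and)
  case (Var x)
  then show ?case by (auto simp: M'_def)
next
  case (Box \<alpha> \<psi>)
  have "\<And>t. (s,t) \<in> rel M \<alpha> \<Longrightarrow> t \<in> St M" using rel_sub(2)[OF assms(1)] by blast
  with Box show ?case by (auto simp: M'_def)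
next
  case (Test \<psi>)
  then show ?case by (auto simp: M'_def)
next
  case (Star \<alpha>)
  then show ?case by (auto simp: M'_def)
qed (auto simp: M'_def)

lemma lemma1_fwd:
  assumes "vars \<phi> \<subseteq> {1..n}" "satisfiable TYPE('s) \<phi>"
  shows "satisfiable TYPE('s) (hat n l \<phi>)"
proof -
  obtain M :: "'s kmodel" and s where M: "is_model M" "s \<in> St M" "sat M s \<phi>"
    using assms(2) unfolding satisfiable_def by blast
  define M' where "M' \<equiv> M\<lparr>V := (V M)(n+1 := St M)\<rparr>"
  have m': "is_model M'" using M(1) by (auto simp: M'_def is_model_def)
  have t: "sat M' s (tr n \<phi>)" using fwd(1)[OF M(1) assms(1) M(2)] M(3) by (simp add: M'_def)
  have sub: "rel M' (Star (gamma l)) \<subseteq> St M' \<times> St M'" using rel_sub(2)[OF m'] by blast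
  have "sat M' s (Theta n l)"
    using M(2) sub by (auto simp: Theta_def And_def Neg_def Dia_def M'_def)
  moreover have "s \<in> St M'" using M(2) by (simp add: M'_def)
  ultimately have "is_model M' \<and> s \<in> St M' \<and> sat M' s (hat n l \<phi>)"
    using t m' by (simp add: hat_def And_def Neg_def)
  then show ?thesis unfolding satisfiable_def by blast
qed

lemma trancl_restrict:
  assumes "\<And>x y. x \<in> P \<Longrightarrow> y \<in> P \<Longrightarrow> (x,y) \<in> A \<longleftrightarrow> (x,y) \<in> B"
    and "A \<subseteq> P \<times> P"
    and "\<And>x z y. x \<in> P \<Longrightarrow> (x,z) \<in> B\<^sup>+ \<Longrightarrow> (z,y) \<in> B \<Longrightarrow> y \<in> P \<Longrightarrow> z \<in> P"
    and "x \<in> P" "y \<in> P"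
  shows "(x,y) \<in> A\<^sup>+ \<longleftrightarrow> (x,y) \<in> B\<^sup>+"
proof
  assume "(x,y) \<in> A\<^sup>+"
  then show "(x,y) \<in> B\<^sup>+"
  proof (induction rule: trancl_induct)
    case (base y)
    then show ?case using assms(1,2) by blast
  next
    case (step y z)
    have "y \<in> P" "z \<in> P" using step(2) assms(2) by auto
    then have "(y,z) \<in> B" using assms(1) step(2) by blast
    then show ?case using step(3) by (meson trancl.trancl_into_trancl)
  qed
next
  assume "(x,y) \<in> B\<^sup>+"
  then show "(x,y) \<in> A\<^sup>+" using \<open>y \<in> P\<close>
  proof (induction rule: trancl_induct)
    case (base y)
    then show ?case using assms(1,4) by blast
  next
    case (step y z)
    then have "y \<in> P" using assms(3)[OF assms(4)] by blast
    then show ?case using step assms(1) by (meson trancl.trancl_into_trancl)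
  qed
qed

lemma bwd_core:
  fixes M :: "'s kmodel" and n l :: nat and s :: 's
  assumes m: "is_model M" and sS: "s \<in> St M"
  assumes G_def: "G = (\<Union>a\<in>{1..l}. R M a)"
  assumes P_def: "P = {t. (s,t) \<in> G\<^sup>* \<and> t \<in> V M (n+1)}"
  assumes N_def: "N = \<lparr>St = P, R = (\<lambda>a. R M a \<inter> P \<times> P), V = (\<lambda>p. V M p \<inter> P)\<rparr>"
  assumes F1: "\<And>u t. (s,u) \<in> G\<^sup>* \<Longrightarrow> (u,t) \<in> G \<Longrightarrow> t \<in> P \<Longrightarrow> u \<in> P"
  shows "atoms \<psi> \<subseteq> {1..l} \<Longrightarrow> x \<in> P \<Longrightarrow> sat N x \<psi> = sat M x (tr n \<psi>)"
    and "patoms \<alpha> \<subseteq> {1..l} \<Longrightarrow> rel M (ptr n \<alpha>) \<subseteq> G\<^sup>* \<and> rel N \<alpha> \<subseteq> P \<times> P \<and>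
           (\<forall>x\<in>P. \<forall>y\<in>P. (x,y) \<in> rel N \<alpha> \<longleftrightarrow> (x,y) \<in> rel M (ptr n \<alpha>))"
proof -
  have PS: "P \<subseteq> St M" using m by (auto simp: P_def is_model_def)
  have F1': "u \<in> P" if "(s,u) \<in> G\<^sup>*" "(u,t) \<in> G\<^sup>*" "t \<in> P" for u t
    using that(2,1,3)
  proof (induction rule: converse_rtrancl_induct)
    case base then show ?case by simp
  next
    case (step y z)
    then show ?case using F1 by (meson rtrancl.rtrancl_into_rtrancl)
  qed
  have PR: "(s,x) \<in> G\<^sup>*" if "x \<in> P" for x using that by (auto simp: P_def)
  show "atoms \<psi> \<subseteq> {1..l} \<Longrightarrow> x \<in> P \<Longrightarrow> sat N x \<psi> = sat M x (tr n \<psi>)"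
    and "patoms \<alpha> \<subseteq> {1..l} \<Longrightarrow> rel M (ptr n \<alpha>) \<subseteq> G\<^sup>* \<and> rel N \<alpha> \<subseteq> P \<times> P \<and>
           (\<forall>x\<in>P. \<forall>y\<in>P. (x,y) \<in> rel N \<alpha> \<longleftrightarrow> (x,y) \<in> rel M (ptr n \<alpha>))"
  proof (induction \<psi> and \<alpha> arbitrary: x and)
    case (Var p)
    then show ?case by (auto simp: N_def)
  next
    case Bot
    then show ?case by simp
  next
    case (Imp \<psi>1 \<psi>2)
    then show ?case by simp
  next
    case (Box \<alpha> \<psi>)
    have IHa: "rel M (ptr n \<alpha>) \<subseteq> G\<^sup>*" "rel N \<alpha> \<subseteq> P \<times> P"
      "\<And>x y. x\<in>P \<Longrightarrow> y\<in>P \<Longrightarrow> (x,y) \<in> rel N \<alpha> \<longleftrightarrow> (x,y) \<in> rel M (ptr n \<alpha>)"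
      using Box by auto
    have IHp: "\<And>y. y \<in> P \<Longrightarrow> sat N y \<psi> = sat M y (tr n \<psi>)" using Box by auto
    have key: "t \<in> P \<longleftrightarrow> t \<in> V M (n+1)" if "(x,t) \<in> rel M (ptr n \<alpha>)" for t
    proof -
      have "(s,t) \<in> G\<^sup>*" using PR[OF Box.prems(2)] IHa(1) that by (meson rtrancl_trans subsetD)
      then show ?thesis by (auto simp: P_def)
    qed
    show ?case
    proof
      assume A: "sat N x (Box \<alpha> \<psi>)"
      show "sat M x (tr n (Box \<alpha> \<psi>))"
      proof (clarsimp)
        fix t assume t: "(x,t) \<in> rel M (ptr n \<alpha>)" "t \<in> V M (Suc n)"
        then have tP: "t \<in> P" using key by simp
        then have "(x,t) \<in> rel N \<alpha>" using IHa(3)[OF Box.prems(2) tP] t by simp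
        then show "sat M t (tr n \<psi>)" using A IHp tP by auto
      qed
    next
      assume A: "sat M x (tr n (Box \<alpha> \<psi>))"
      show "sat N x (Box \<alpha> \<psi>)"
      proof (clarsimp)
        fix t assume t: "(x,t) \<in> rel N \<alpha>"
        then have tP: "t \<in> P" using IHa(2) by blast
        then have "(x,t) \<in> rel M (ptr n \<alpha>)" using IHa(3)[OF Box.prems(2) tP] t by simp
        moreover have "t \<in> V M (Suc n)" using tP by (auto simp: P_def)
        ultimately show "sat N t \<psi>" using A IHp tP by auto
      qed
    qed
  next
    case (Atom a)
    then show ?case by (auto simp: N_def G_def intro!: r_into_rtrancl)
  next
    case (Test \<psi>)
    then show ?case using PS by (auto simp: N_def)
  next
    case (Seq \<alpha> \<beta>)
    have A: "rel M (ptr n \<alpha>) \<subseteq> G\<^sup>*" "rel N \<alpha> \<subseteq> P \<times> P"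
      "\<And>x y. x\<in>P \<Longrightarrow> y\<in>P \<Longrightarrow> (x,y) \<in> rel N \<alpha> \<longleftrightarrow> (x,y) \<in> rel M (ptr n \<alpha>)"
      using Seq by auto
    have B: "rel M (ptr n \<beta>) \<subseteq> G\<^sup>*" "rel N \<beta> \<subseteq> P \<times> P"
      "\<And>x y. x\<in>P \<Longrightarrow> y\<in>P \<Longrightarrow> (x,y) \<in> rel N \<beta> \<longleftrightarrow> (x,y) \<in> rel M (ptr n \<beta>)"
      using Seq by auto
    have "rel M (ptr n (Seq \<alpha> \<beta>)) \<subseteq> G\<^sup>*" using A(1) B(1) by (auto intro: rtrancl_trans)
    moreover have "rel N (Seq \<alpha> \<beta>) \<subseteq> P \<times> P" using A(2) B(2) by auto
    moreover have "(x,y) \<in> rel N (Seq \<alpha> \<beta>) \<longleftrightarrow> (x,y) \<in> rel M (ptr n (Seq \<alpha> \<beta>))"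
      if xy: "x \<in> P" "y \<in> P" for x y
    proof
      assume "(x,y) \<in> rel N (Seq \<alpha> \<beta>)"
      then obtain z where z: "(x,z) \<in> rel N \<alpha>" "(z,y) \<in> rel N \<beta>" by auto
      then have "z \<in> P" using A(2) by blast
      then show "(x,y) \<in> rel M (ptr n (Seq \<alpha> \<beta>))" using z A(3) B(3) xy by auto
    next
      assume "(x,y) \<in> rel M (ptr n (Seq \<alpha> \<beta>))"
      then obtain z where z: "(x,z) \<in> rel M (ptr n \<alpha>)" "(z,y) \<in> rel M (ptr n \<beta>)" by auto
      have "(s,z) \<in> G\<^sup>*" using PR[OF xy(1)] z(1) A(1) by (meson rtrancl_trans subsetD)
      then have "z \<in> P" using F1' z(2) B(1) xy(2) by blast
      then have "(x,z) \<in> rel N \<alpha>" "(z,y) \<in> rel N \<beta>" using z A(3) B(3) xy by auto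
      then show "(x,y) \<in> rel N (Seq \<alpha> \<beta>)" by auto
    qed
    ultimately show ?case by blast
  next
    case (Union \<alpha> \<beta>)
    then show ?case by auto
  next
    case (Inter \<alpha> \<beta>)
    then show ?case by auto
  next
    case (Star \<alpha>)
    have A: "rel M (ptr n \<alpha>) \<subseteq> G\<^sup>*" "rel N \<alpha> \<subseteq> P \<times> P"
      "\<And>x y. x\<in>P \<Longrightarrow> y\<in>P \<Longrightarrow> (x,y) \<in> rel N \<alpha> \<longleftrightarrow> (x,y) \<in> rel M (ptr n \<alpha>)"
      using Star by auto
    have T0: "(rel M (ptr n \<alpha>))\<^sup>* \<subseteq> (G\<^sup>*)\<^sup>*" by (rule rtrancl_mono[OF A(1)])
    have T: "(rel M (ptr n \<alpha>))\<^sup>+ \<subseteq> G\<^sup>*"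
    proof
      fix p assume "p \<in> (rel M (ptr n \<alpha>))\<^sup>+"
      then have "p \<in> (rel M (ptr n \<alpha>))\<^sup>*" by (cases p) (simp add: trancl_into_rtrancl)
      then show "p \<in> G\<^sup>*" using T0 by auto
    qed
    have "rel M (ptr n (Star \<alpha>)) \<subseteq> G\<^sup>*" using T by auto
    moreover have "rel N (Star \<alpha>) \<subseteq> P \<times> P"
      using A(2) trancl_subset_Sigma[of "rel N \<alpha>" P] by (auto simp: N_def)
    moreover have "(x,y) \<in> (rel N \<alpha>)\<^sup>+ \<longleftrightarrow> (x,y) \<in> (rel M (ptr n \<alpha>))\<^sup>+"
      if xy: "x \<in> P" "y \<in> P" for x y
    proof (rule trancl_restrict[OF A(3) A(2) _ xy])
      fix x z y assume h: "x \<in> P" "(x,z) \<in> (rel M (ptr n \<alpha>))\<^sup>+" "(z,y) \<in> rel M (ptr n \<alpha>)" "y \<in> P"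
      have "(s,z) \<in> G\<^sup>*" using PR[OF h(1)] h(2) T by (meson rtrancl_trans subsetD)
      then show "z \<in> P" using F1' h(3) A(1) h(4) by blast
    qed
    ultimately show ?case using PS by (auto simp: N_def)
  qed
qed

lemma lemma1_bwd:
  assumes "atoms \<phi> \<subseteq> {1..l}" "l \<ge> 1" "satisfiable TYPE('s) (hat n l \<phi>)"
  shows "satisfiable TYPE('s) \<phi>"
proof -
  obtain M :: "'s kmodel" and s where M: "is_model M" "s \<in> St M" "sat M s (hat n l \<phi>)"
    using assms(3) unfolding satisfiable_def by blast
  define G where "G \<equiv> (\<Union>a\<in>{1..l}. R M a)"
  define P where "P \<equiv> {t. (s,t) \<in> G\<^sup>* \<and> t \<in> V M (n+1)}"
  define N where "N \<equiv> \<lparr>St = P, R = (\<lambda>a. R M a \<inter> P \<times> P), V = (\<lambda>p. V M p \<inter> P)\<rparr>"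
  have rg: "rel M (gamma l) = G" using rel_gamma[OF assms(2)] G_def by simp
  have th: "sat M s (Theta n l)" and tr: "sat M s (tr n \<phi>)"
    using M(3) by (auto simp: hat_def And_def Neg_def)
  have sP: "s \<in> V M (n+1)" and
    box: "\<And>u. (s,u) \<in> Id_on (St M) \<union> G\<^sup>+ \<Longrightarrow> (\<exists>t. (u,t) \<in> G \<and> t \<in> V M (n+1)) \<Longrightarrow> u \<in> V M (n+1)"
    using th rg by (auto simp: Theta_def And_def Neg_def Dia_def)
  have GS: "G \<subseteq> St M \<times> St M" using M(1) by (auto simp: G_def is_model_def)
  have F1: "u \<in> P" if "(s,u) \<in> G\<^sup>*" "(u,t) \<in> G" "t \<in> P" for u t
  proof -
    have "(s,u) \<in> Id_on (St M) \<union> G\<^sup>+" using that(1) M(2)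
      by (metis Id_on_iff UnI1 UnI2 rtranclD)
    moreover have "t \<in> V M (n+1)" using that(3) by (simp add: P_def)
    ultimately have "u \<in> V M (n+1)" using box that(2) by blast
    then show ?thesis using that(1) by (simp add: P_def)
  qed
  have sPP: "s \<in> P" using sP by (simp add: P_def)
  have "sat N s \<phi>"
    using bwd_core(1)[OF M(1) M(2) G_def[THEN meta_eq_to_obj_eq] P_def[THEN meta_eq_to_obj_eq] N_def[THEN meta_eq_to_obj_eq] F1 assms(1) sPP] tr
    by simp
  moreover have "is_model N" using sPP M(1) by (auto simp: N_def is_model_def)
  ultimately show ?thesis unfolding satisfiable_def using sPP N_def by fastforce
qed

theorem lemma1:
  fixes \<phi> :: fm and n l :: nat
  assumes "vars \<phi> \<subseteq> {1..n}" and "atoms \<phi> \<subseteq> {1..l}" and "l \<ge> 1"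
  shows "satisfiable TYPE('s) \<phi> \<longleftrightarrow> satisfiable TYPE('s) (hat n l \<phi>)"
  using lemma1_fwd[OF assms(1)] lemma1_bwd[OF assms(2,3)] by blast

end
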